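(* Assume $\phi$ is convex, $R_\phi$ is strictly convex, $\mathbf{w}_{\mathrm{sup}}$ is the minimizer of $R_\phi$, and $\mathbf{w}_{\mathrm{sup}}\in\mathcal{C}_\phi$. Then there exists $\mathbf{q}^\ast\in[0,1]^U$ such that for every $\mathbf{w}_{\mathrm{semi}}\in\mathbb{R}^d$ with $\mathbf{w}_{\mathrm{semi}}\neq\mathbf{w}_{\mathrm{sup}}$ we have $D_\phi(\mathbf{w}_{\mathrm{semi}},\mathbf{q}^\ast)>0$.
   Context: Fix integers $L,U,d\ge 1$. Let $\mathbf{X}\in\mathbb{R}^{L\times d}$ be a matrix whose rows $\mathbf{x}_1^\top,\dots,\mathbf{x}_L^\top$ are the labeled objects, with labels $\mathbf{y}\in\{-1,+1\}^L$. Let $\mathbf{X}_{\mathrm{u}}\in\mathbb{R}^{U\times d}$ be a matrix whose rows $\mathbf{x}_{\mathrm{u},1}^\top,\dots,\mathbf{x}_{\mathrm{u},U}^\top$ are the unlabeled objects. Let $\phi:\mathbb{R}\to\mathbb{R}$ be a loss function, $\Omega:\mathbb{R}^d\to\mathbb{R}$ a convex function and $\lambda\ge 0$. The supervised risk is $R_\phi(\mathbf{w})=\sum_{i=1}^L\phi(y_i\mathbf{x}_i^\top\mathbf{w})+\lambda\Omega(\mathbf{w})$. For responsibilities $\mathbf{q}\in[0,1]^U$ the semi-supervised risk is $R^{\mathrm{semi}}_\phi(\mathbf{w},\mathbf{q})=R_\phi(\mathbf{w})+\sum_{j=1}^U\big[q_j\phi(\mathbf{x}_{\mathrm{u},j}^\top\mathbf{w})+(1-q_j)\phi(-\mathbf{x}_{\mathrm{u},j}^\top\mathbf{w})\big]$.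 Given the minimizer $\mathbf{w}_{\mathrm{sup}}$ of $R_\phi$, define $D_\phi(\mathbf{w},\mathbf{q})=R^{\mathrm{semi}}_\phi(\mathbf{w},\mathbf{q})-R^{\mathrm{semi}}_\phi(\mathbf{w}_{\mathrm{sup}},\mathbf{q})$. The constraint set is $\mathcal{C}_\phi=\{\mathbf{w}\in\mathbb{R}^d:\ \exists\,\mathbf{q}\in[0,1]^U \text{ such that } \mathbf{w} \text{ minimizes } R^{\mathrm{semi}}_\phi(\cdot,\mathbf{q})\}$. *)

theory Defs
  imports "HOL-Analysis.Analysis"
begin

definition strictly_convex_on :: "'a::real_vector set \<Rightarrow> ('a \<Rightarrow> real) \<Rightarrow> bool" where
  "strictly_convex_on S f \<longleftrightarrow>
     (\<forall>x\<in>S. \<forall>y\<in>S. \<forall>t::real. x \<noteq> y \<and> 0 < t \<and> t < 1 \<longrightarrow>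
        f (t *\<^sub>R x + (1 - t) *\<^sub>R y) < t * f x + (1 - t) * f y)"

definition R_sup ::
  "(real \<Rightarrow> real) \<Rightarrow> (real^'d \<Rightarrow> real) \<Rightarrow> real \<Rightarrow> nat \<Rightarrow> (nat \<Rightarrow> real^'d) \<Rightarrow> (nat \<Rightarrow> real)
     \<Rightarrow> real^'d \<Rightarrow> real" where
  "R_sup phi Omega lam L X y w = (\<Sum>i<L. phi (y i * (X i \<bullet> w))) + lam * Omega w"

definition R_semi ::
  "(real \<Rightarrow> real) \<Rightarrow> (real^'d \<Rightarrow> real) \<Rightarrow> real \<Rightarrow> nat \<Rightarrow> (nat \<Rightarrow> real^'d) \<Rightarrow> (nat \<Rightarrow> real)
     \<Rightarrow> nat \<Rightarrow> (nat \<Rightarrow> real^'d) \<Rightarrow> real^'d \<Rightarrow> (nat \<Rightarrow> real) \<Rightarrow> real" where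
  "R_semi phi Omega lam L X y U Xu w q =
     R_sup phi Omega lam L X y w
     + (\<Sum>j<U. q j * phi (Xu j \<bullet> w) + (1 - q j) * phi (- (Xu j \<bullet> w)))"

definition resp :: "nat \<Rightarrow> (nat \<Rightarrow> real) set" where
  "resp U = {q. \<forall>j<U. 0 \<le> q j \<and> q j \<le> 1}"

definition C_set ::
  "(real \<Rightarrow> real) \<Rightarrow> (real^'d \<Rightarrow> real) \<Rightarrow> real \<Rightarrow> nat \<Rightarrow> (nat \<Rightarrow> real^'d) \<Rightarrow> (nat \<Rightarrow> real)
     \<Rightarrow> nat \<Rightarrow> (nat \<Rightarrow> real^'d) \<Rightarrow> (real^'d) set" where
  "C_set phi Omega lam L X y U Xu =
     {w. \<exists>q\<in>resp U. \<forall>v. R_semi phi Omega lam L X y U Xu w q \<le> R_semi phi Omega lam L X y U Xu v q}"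

definition D_phi ::
  "(real \<Rightarrow> real) \<Rightarrow> (real^'d \<Rightarrow> real) \<Rightarrow> real \<Rightarrow> nat \<Rightarrow> (nat \<Rightarrow> real^'d) \<Rightarrow> (nat \<Rightarrow> real)
     \<Rightarrow> nat \<Rightarrow> (nat \<Rightarrow> real^'d) \<Rightarrow> real^'d \<Rightarrow> real^'d \<Rightarrow> (nat \<Rightarrow> real) \<Rightarrow> real" where
  "D_phi phi Omega lam L X y U Xu wsup w q =
     R_semi phi Omega lam L X y U Xu w q - R_semi phi Omega lam L X y U Xu wsup q"

end

theory Submission
  imports Defs
begin

theorem lemma1:
  fixes phi :: "real \<Rightarrow> real" and Omega :: "real^'d \<Rightarrow> real" and lam :: real
    and L U :: nat and X Xu :: "nat \<Rightarrow> real^'d" and y :: "nat \<Rightarrow> real"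
    and wsup :: "real^'d"
  assumes "L \<ge> 1" and "U \<ge> 1"
    and "\<forall>i<L. y i = -1 \<or> y i = 1"
    and "convex_on UNIV Omega" and "lam \<ge> 0"
    and "convex_on UNIV phi"
    and "strictly_convex_on UNIV (R_sup phi Omega lam L X y)"
    and "\<forall>w. R_sup phi Omega lam L X y wsup \<le> R_sup phi Omega lam L X y w"
    and "wsup \<in> C_set phi Omega lam L X y U Xu"
  shows "\<exists>q\<in>resp U. \<forall>wsemi. wsemi \<noteq> wsup \<longrightarrow> D_phi phi Omega lam L X y U Xu wsup wsemi q > 0"
proof -
  from assms(9) obtain q where q: "q \<in> resp U"
    and mn: "\<forall>v. R_semi phi Omega lam L X y U Xu wsup q \<le> R_semi phi Omega lam L X y U Xu v q"
    unfolding C_set_def by blast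
  have cphi: "phi ((1/2) * a + (1/2) * b) \<le> (1/2) * phi a + (1/2) * phi b" for a b
    using convex_onD[OF assms(6), of "1/2" a b] by simp
  define G where "G w = (\<Sum>j<U. q j * phi (Xu j \<bullet> w) + (1 - q j) * phi (- (Xu j \<bullet> w)))" for w
  have G: "G ((1/2) *\<^sub>R w + (1/2) *\<^sub>R v) \<le> (1/2) * G w + (1/2) * G v" for w v
  proof -
    have "G ((1/2) *\<^sub>R w + (1/2) *\<^sub>R v) \<le>
      (\<Sum>j<U. (1/2) * (q j * phi (Xu j \<bullet> w) + (1 - q j) * phi (- (Xu j \<bullet> w)))
            + (1/2) * (q j * phi (Xu j \<bullet> v) + (1 - q j) * phi (- (Xu j \<bullet> v))))"
      unfolding G_def
    proof (rule sum_mono)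
      fix j assume "j \<in> {..<U}"
      then have q0: "0 \<le> q j" and q1: "q j \<le> 1" using q unfolding resp_def by auto
      have e1: "Xu j \<bullet> ((1/2) *\<^sub>R w + (1/2) *\<^sub>R v) = (1/2) * (Xu j \<bullet> w) + (1/2) * (Xu j \<bullet> v)"
        by (simp add: inner_add_right)
      have e2: "- (Xu j \<bullet> ((1/2) *\<^sub>R w + (1/2) *\<^sub>R v)) = (1/2) * (- (Xu j \<bullet> w)) + (1/2) * (-(Xu j \<bullet> v))"
        by (simp add: inner_add_right)
      have a: "q j * phi (Xu j \<bullet> ((1/2) *\<^sub>R w + (1/2) *\<^sub>R v)) \<le> q j * ((1/2) * phi (Xu j \<bullet> w) + (1/2) * phi (Xu j \<bullet> v))"
        unfolding e1 by (rule mult_left_mono[OF cphi q0])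
      have b: "(1 - q j) * phi (- (Xu j \<bullet> ((1/2) *\<^sub>R w + (1/2) *\<^sub>R v))) \<le> (1 - q j) * ((1/2) * phi (- (Xu j \<bullet> w)) + (1/2) * phi (-(Xu j \<bullet> v)))"
        unfolding e2 by (rule mult_left_mono[OF cphi]) (use q1 in simp)
      show "q j * phi (Xu j \<bullet> ((1/2) *\<^sub>R w + (1/2) *\<^sub>R v)) + (1 - q j) * phi (- (Xu j \<bullet> ((1/2) *\<^sub>R w + (1/2) *\<^sub>R v)))
        \<le> (1/2) * (q j * phi (Xu j \<bullet> w) + (1 - q j) * phi (- (Xu j \<bullet> w)))
            + (1/2) * (q j * phi (Xu j \<bullet> v) + (1 - q j) * phi (- (Xu j \<bullet> v)))"
      proof -
        have aux: "\<And>A B C D E F. q j*E \<le> q j*((1/2)*A+(1/2)*C) \<Longrightarrow> (1-q j)*F \<le> (1-q j)*((1/2)*B+(1/2)*D)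
           \<Longrightarrow> q j*E+(1-q j)*F \<le> (1/2)*(q j*A+(1-q j)*B)+(1/2)*(q j*C+(1-q j)*D)"
        proof -
          fix A B C D E F
          assume h1: "q j*E \<le> q j*((1/2)*A+(1/2)*C)" and h2: "(1-q j)*F \<le> (1-q j)*((1/2)*B+(1/2)*D)"
          have "(1/2)*(q j*A+(1-q j)*B)+(1/2)*(q j*C+(1-q j)*D) = q j*((1/2)*A+(1/2)*C) + (1-q j)*((1/2)*B+(1/2)*D)"
            by (simp add: field_simps)
          then show "q j*E+(1-q j)*F \<le> (1/2)*(q j*A+(1-q j)*B)+(1/2)*(q j*C+(1-q j)*D)"
            using add_mono[OF h1 h2] by simp
        qed
        show ?thesis by (rule aux[OF a b])
      qed
    qed
    also have "\<dots> = (1/2) * G w + (1/2) * G v"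
      unfolding G_def by (simp only: sum.distrib sum_distrib_left [symmetric])
    finally show ?thesis .
  qed
  have RS: "R_semi phi Omega lam L X y U Xu w q = R_sup phi Omega lam L X y w + G w" for w
    unfolding R_semi_def G_def by simp
  show ?thesis
  proof (intro bexI[OF _ q] allI impI)
    fix w assume ne: "w \<noteq> wsup"
    have s: "R_sup phi Omega lam L X y ((1/2) *\<^sub>R w + (1 - 1/2) *\<^sub>R wsup)
        < (1/2) * R_sup phi Omega lam L X y w + (1 - 1/2) * R_sup phi Omega lam L X y wsup"
      using assms(7) ne unfolding strictly_convex_on_def
      by (metis UNIV_I field_sum_of_halves half_gt_zero_iff zero_less_one less_add_same_cancel1)
    have "R_semi phi Omega lam L X y U Xu wsup q \<le> R_semi phi Omega lam L X y U Xu ((1/2) *\<^sub>R w + (1/2) *\<^sub>R wsup) q"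
      using mn by blast
    then show "D_phi phi Omega lam L X y U Xu wsup w q > 0"
      unfolding D_phi_def RS using s G[of w wsup] by simp
  qed
qed

end
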